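(* Let $p\in(0,1)$ and let $(\lambda_n)_{n\ge1}$ be a sequence with $\lambda_1=1$ and $0\le\lambda_n\le\lambda_{n-1}$ for all $n>1$. Let $r_1,r_2,\dots$ be $\{0,1\}$-valued random variables with $\Pr(r_1=1)=p$ and, for every $n\ge2$, $\Pr(r_n=1\mid r_1,\dots,r_{n-1})=\lambda_n p+(1-\lambda_n)\bar p_{n-1}$, where $\bar p_m=\frac1m\sum_{i=1}^m r_i$. Then for every $n\ge1$, $\mathbb{E}[\bar p_n]=\mathbb{E}[r_n]=p$.
   Context: This is a model of the bandwagon effect: $r_n$ is the $n$-th binary rating of an item, $p$ the true preference, $\bar p_m$ the sample mean of the first $m$ ratings, and $\lambda_n$ the weight the $n$-th user puts on their own preference versus the current sample mean. *)

theory Defs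
  imports "HOL-Probability.Probability"
begin

definition pbar :: "(nat \<Rightarrow> 'a \<Rightarrow> real) \<Rightarrow> nat \<Rightarrow> 'a \<Rightarrow> real" where
  "pbar r m x = (\<Sum>i=1..m. r i x) / real m"

definition hist :: "'a measure \<Rightarrow> (nat \<Rightarrow> 'a \<Rightarrow> real) \<Rightarrow> nat \<Rightarrow> 'a measure" where
  "hist M r n = sigma (space M)
     {r i -` A \<inter> space M | i A. 1 \<le> i \<and> i < n \<and> A \<in> sets borel}"

end

theory Submission
  imports Defs
begin

theorem theoremA1:
  fixes M :: "'a measure" and r :: "nat \<Rightarrow> 'a \<Rightarrow> real"
    and lam :: "nat \<Rightarrow> real" and p :: real
  assumes "prob_space M"
    and "0 < p" "p < 1"
    and "lam 1 = 1"
    and "\<And>n. n > 1 \<Longrightarrow> 0 \<le> lam n \<and> lam n \<le> lam (n - 1)"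
    and "\<And>n. r n \<in> borel_measurable M"
    and "\<And>n x. x \<in> space M \<Longrightarrow> r n x \<in> {0, 1}"
    and "measure M {x \<in> space M. r 1 x = 1} = p"
    and "\<And>n. n \<ge> 2 \<Longrightarrow>
           AE x in M. real_cond_exp M (hist M r n) (indicator {x \<in> space M. r n x = 1}) x
                      = lam n * p + (1 - lam n) * pbar r (n - 1) x"
  shows "\<forall>n\<ge>1. (\<integral>x. pbar r n x \<partial>M) = p \<and> (\<integral>x. r n x \<partial>M) = p"
proof -
  interpret prob_space M by fact
  have meas[measurable]: "\<And>n. r n \<in> borel_measurable M" by fact
  have int_r: "integrable M (r n)" for n
    proof (rule integrable_const_bound[where B=1])
    show "AE x in M. norm (r n x) \<le> 1"
      by (rule AE_I2) (use assms(7)[of _ n] in fastforce)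
  qed simp
  have set_meas: "{x \<in> space M. r n x = 1} \<in> sets M" for n by measurable
  have int_ind: "integrable M (indicator {x \<in> space M. r n x = 1} :: 'a \<Rightarrow> real)" for n
    by (rule integrable_const_bound[where B=1]) (auto simp: indicator_def set_meas)
  have E_ind: "(\<integral>x. r n x \<partial>M) = (\<integral>x. indicator {x \<in> space M. r n x = 1} x \<partial>M)" for n
    by (rule Bochner_Integration.integral_cong[OF refl]) (use assms(7)[of _ n] in \<open>fastforce simp: indicator_def\<close>)
  have int_pbar: "integrable M (pbar r m)" for m
    unfolding pbar_def by (intro integrable_divide Bochner_Integration.integrable_sum int_r)
  have E_pbar: "(\<integral>x. pbar r m x \<partial>M) = (\<Sum>i=1..m. (\<integral>x. r i x \<partial>M)) / real m" for m
    unfolding pbar_def by (simp add: integral_sum int_r)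
  have step: "(\<integral>x. r n x \<partial>M) = lam n * p + (1 - lam n) * (\<integral>x. pbar r (n - 1) x \<partial>M)"
    if n2: "n \<ge> 2" for n
  proof -
    have sub: "subalgebra M (hist M r n)"
      unfolding subalgebra_def hist_def
    proof
      show "space (sigma (space M) {r i -` A \<inter> space M |i A. 1 \<le> i \<and> i < n \<and> A \<in> sets borel}) = space M"
        by (rule space_measure_of) auto
      show "sets (sigma (space M) {r i -` A \<inter> space M |i A. 1 \<le> i \<and> i < n \<and> A \<in> sets borel}) \<subseteq> sets M"
      proof (subst sets_measure_of)
        show "{r i -` A \<inter> space M |i A. 1 \<le> i \<and> i < n \<and> A \<in> sets borel} \<subseteq> Pow (space M)" by auto
        show "sigma_sets (space M) {r i -` A \<inter> space M |i A. 1 \<le> i \<and> i < n \<and> A \<in> sets borel} \<subseteq> sets M"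
          by (rule sets.sigma_sets_subset) (auto intro: measurable_sets)
      qed
    qed
    interpret fms: finite_measure_subalgebra M "hist M r n"
      by unfold_locales (rule sub)
    have "(\<integral>x. r n x \<partial>M) = (\<integral>x. real_cond_exp M (hist M r n) (indicator {x \<in> space M. r n x = 1}) x \<partial>M)"
      using E_ind[of n] fms.real_cond_exp_int(2)[of "indicator {x \<in> space M. r n x = 1}"] set_meas[of n]
        int_ind by simp
    also have "\<dots> = (\<integral>x. lam n * p + (1 - lam n) * pbar r (n - 1) x \<partial>M)"
      by (rule integral_cong_AE) (use assms(9)[OF n2] int_pbar[of "n-1"] in \<open>auto intro!: borel_measurable_integrable\<close>)
    also have "\<dots> = lam n * p + (1 - lam n) * (\<integral>x. pbar r (n - 1) x \<partial>M)"
      using int_pbar by (simp add: prob_space)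
    finally show ?thesis .
  qed
  have Er: "(\<integral>x. r n x \<partial>M) = p" if "n \<ge> 1" for n
    using that
  proof (induction n rule: less_induct)
    case (less n)
    show ?case
    proof (cases "n = 1")
      case True
      then show ?thesis using E_ind[of 1] assms(8) set_meas by simp
    next
      case False
      then have n2: "n \<ge> 2" using less.prems by simp
      have "(\<Sum>i=1..n-1. (\<integral>x. r i x \<partial>M)) = (\<Sum>i=1..n-1. p)"
        by (rule sum.cong) (use less.IH in auto)
      then have "(\<integral>x. pbar r (n - 1) x \<partial>M) = p"
        using n2 E_pbar[of "n-1"] by simp
      then show ?thesis using step[OF n2] by (simp add: algebra_simps)
    qed
  qed
  show ?thesis
  proof (intro allI impI conjI)
    fix n :: nat assume "n \<ge> 1"
    have "(\<Sum>i=1..n. (\<integral>x. r i x \<partial>M)) = (\<Sum>i=1..n. p)"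
      by (rule sum.cong) (use Er in auto)
    then show "(\<integral>x. pbar r n x \<partial>M) = p" using \<open>n \<ge> 1\<close> E_pbar[of n] by simp
    show "(\<integral>x. r n x \<partial>M) = p" using Er \<open>n \<ge> 1\<close> by simp
  qed
qed

end
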